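(* Let $(r_n),(R_n)$ be real sequences and $(C_n),(D_n),(d_n)$ complex sequences with $\sum_n(|C_n|^2+|d_nD_n|^2)<\infty$. Assume $r_n\to\chi$ for some $\chi<0$, and that there are $n'\in\mathbb{N}$, $\mu>0$, $\nu>1/2$ with $|R_n|\le\mu n^{-\nu}(|C_n|^2+|d_nD_n|^2)^{1/2}$ for all $n\ge n'$. Then for every $\varepsilon\in(0,1)$ and $T>0$ there exists $n_0=n_0(\varepsilon)\in\mathbb{N}$, independent of $T$ and of the coefficients, such that $$\int_0^\infty k(t)\Big|\sum_{n=n_0}^\infty R_ne^{r_nt}\Big|^2dt\le\varepsilon\,\pi T\sum_{n=n_0}^\infty\frac{|C_n|^2+|d_nD_n|^2}{\pi^2+T^2r_n^2}.$$
   Context: For $T>0$, $k(t):=\sin(\pi t/T)$ for $t\in[0,T]$ and $k(t):=0$ otherwise. *)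

theory Defs
  imports "HOL-Analysis.Analysis"
begin

definition kwin :: "real \<Rightarrow> real \<Rightarrow> real" where
  "kwin T t = (if 0 \<le> t \<and> t \<le> T then sin (pi * t / T) else 0)"

end

theory Submission imports Defs begin

lemma sin_exp_integral:
  fixes T s :: real assumes T: "T > 0"
  shows "((\<lambda>t. sin (pi*t/T) * exp (s*t)) has_integral (pi*T*(1+exp(s*T))/(pi\<^sup>2+s\<^sup>2*T\<^sup>2))) {0..T}"
proof -
  define w where "w = pi/T"
  have w: "w > 0" using T by (simp add: w_def)
  have D: "s\<^sup>2 + w\<^sup>2 > 0" using w by (simp add: add_nonneg_pos)
  define F where "F t = exp (s*t) * (s * sin (w*t) - w * cos (w*t)) / (s\<^sup>2+w\<^sup>2)" for t
  have "((\<lambda>t. sin (w*t) * exp (s*t)) has_integral (F T - F 0)) {0..T}"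
  proof (rule fundamental_theorem_of_calculus)
    show "0 \<le> T" using T by simp
    fix x assume "x \<in> {0..T}"
    have "(F has_real_derivative (exp (s*x) * s * (s * sin (w*x) - w * cos (w*x)) + exp (s*x) * (s * (cos (w*x) * w) + w * (sin (w*x) * w))) / (s\<^sup>2+w\<^sup>2)) (at x within {0..T})"
      unfolding F_def using D w by (auto intro!: derivative_eq_intros)
    moreover have "(exp (s*x) * s * (s * sin (w*x) - w * cos (w*x)) + exp (s*x) * (s * (cos (w*x) * w) + w * (sin (w*x) * w))) / (s\<^sup>2+w\<^sup>2) = sin (w*x) * exp (s*x)"
    proof -
      have "exp (s*x) * s * (s * sin (w*x) - w * cos (w*x)) + exp (s*x) * (s * (cos (w*x) * w) + w * (sin (w*x) * w)) = (s\<^sup>2+w\<^sup>2) * (sin (w*x) * exp (s*x))"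
        by (simp add: algebra_simps power2_eq_square)
      thus ?thesis using D by simp
    qed
    ultimately show "(F has_vector_derivative sin (w*x) * exp (s*x)) (at x within {0..T})"
      by (simp add: has_real_derivative_iff_has_vector_derivative)
  qed
  moreover have "F T - F 0 = pi*T*(1+exp(s*T))/(pi\<^sup>2+s\<^sup>2*T\<^sup>2)"
  proof -
    have "w*T = pi" using T by (simp add: w_def)
    hence "F T - F 0 = w*(1+exp(s*T))/(s\<^sup>2+w\<^sup>2)" using D
      by (simp add: F_def field_simps add_divide_distrib)
    also have "\<dots> = pi*T*(1+exp(s*T))/(pi\<^sup>2+s\<^sup>2*T\<^sup>2)"
    proof -
      have P: "pi\<^sup>2+s\<^sup>2*T\<^sup>2 > 0" by (simp add: add_pos_nonneg)
      have "s\<^sup>2+w\<^sup>2 = (pi\<^sup>2+s\<^sup>2*T\<^sup>2)/T\<^sup>2" using T by (simp add: w_def field_simps power2_eq_square)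
      hence "w*(1+exp(s*T))/(s\<^sup>2+w\<^sup>2) = (w*T\<^sup>2)*(1+exp(s*T))/(pi\<^sup>2+s\<^sup>2*T\<^sup>2)"
        using T P by simp
      moreover have "w*T\<^sup>2 = pi*T" using T by (simp add: w_def power2_eq_square)
      ultimately show ?thesis by simp
    qed
    finally show ?thesis .
  qed
  moreover have "\<And>t. sin (w*t) = sin (pi*t/T)" by (simp add: w_def)
  ultimately show ?thesis by simp
qed

lemma kwin_has_integral:
  assumes "((\<lambda>t. sin (pi*t/T) * \<phi> t) has_integral I) {0..T}"
  shows "((\<lambda>t. kwin T t * \<phi> t) has_integral I) {0..}"
proof (rule has_integral_on_superset)
  show "((\<lambda>t. kwin T t * \<phi> t) has_integral I) {0..T}"
    using assms by (rule has_integral_eq[rotated]) (simp add: kwin_def)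
  show "\<And>x. x \<notin> {0..T} \<Longrightarrow> kwin T x * \<phi> x = 0" by (auto simp: kwin_def)
  show "{0..T} \<subseteq> {0..}" by auto
qed

lemma kwin_nonneg: assumes "T > 0" shows "kwin T t \<ge> 0"
proof (cases "0 \<le> t \<and> t \<le> T")
  case True
  have "pi*t/T \<le> pi" using True assms by (simp add: field_simps)
  moreover have "0 \<le> pi*t/T" using True assms by simp
  ultimately show ?thesis using True by (simp add: kwin_def sin_ge_zero)
qed (auto simp: kwin_def)

lemma prod_le_half: fixes x y :: real shows "x * y \<le> (x\<^sup>2 + y\<^sup>2)/2"
proof -
  have "0 \<le> (x - y)\<^sup>2" by simp
  thus ?thesis by (simp add: power2_eq_square algebra_simps)
qed

theorem lemma5p8:
  fixes r :: "nat \<Rightarrow> real" and chi \<mu> \<nu> :: real and n' :: nat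
  assumes "r \<longlonglongrightarrow> chi" and "chi < 0"
    and "\<mu> > 0" and "\<nu> > 1/2"
  shows "\<forall>\<epsilon>::real. 0 < \<epsilon> \<and> \<epsilon> < 1 \<longrightarrow>
    (\<exists>n0::nat. \<forall>T::real. \<forall>R::nat \<Rightarrow> real. \<forall>C D d :: nat \<Rightarrow> complex.
       T > 0
       \<and> summable (\<lambda>n. (cmod (C n))\<^sup>2 + (cmod (d n * D n))\<^sup>2)
       \<and> (\<forall>n\<ge>n'. n > 0 \<longrightarrow>
             \<bar>R n\<bar> \<le> \<mu> * real n powr (- \<nu>) * sqrt ((cmod (C n))\<^sup>2 + (cmod (d n * D n))\<^sup>2))
       \<longrightarrow>
       integral {0..} (\<lambda>t. kwin T t * (\<bar>\<Sum>n. R (n + n0) * exp (r (n + n0) * t)\<bar>)\<^sup>2)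
         \<le> \<epsilon> * pi * T * (\<Sum>n. ((cmod (C (n + n0)))\<^sup>2 + (cmod (d (n + n0) * D (n + n0)))\<^sup>2)
                                   / (pi\<^sup>2 + T\<^sup>2 * (r (n + n0))\<^sup>2)))"
proof (intro allI impI)
  fix \<epsilon> :: real assume eps: "0 < \<epsilon> \<and> \<epsilon> < 1"
  have sp: "summable (\<lambda>n. real n powr (-2*\<nu>))" using assms(4) by (simp add: summable_real_powr_iff)
  have sp2: "summable (\<lambda>n. \<mu>\<^sup>2 * real n powr (-2*\<nu>))" using summable_mult[OF sp] by blast
  obtain N1 where N1: "\<forall>n\<ge>N1. norm (\<Sum>i. \<mu>\<^sup>2 * real (i+n) powr (-2*\<nu>)) < \<epsilon>/2"
    using suminf_exist_split[OF _ sp2, of "\<epsilon>/2"] eps by auto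
  have "eventually (\<lambda>n. r n < 0) sequentially" using order_tendstoD(2)[OF assms(1) assms(2)] .
  then obtain N2 where N2: "\<forall>n\<ge>N2. r n < 0" by (auto simp: eventually_sequentially)
  define n0 where "n0 = max (max N1 N2) (max n' 1)"
  show "\<exists>n0::nat. \<forall>T::real. \<forall>R::nat \<Rightarrow> real. \<forall>C D d :: nat \<Rightarrow> complex.
       T > 0
       \<and> summable (\<lambda>n. (cmod (C n))\<^sup>2 + (cmod (d n * D n))\<^sup>2)
       \<and> (\<forall>n\<ge>n'. n > 0 \<longrightarrow>
             \<bar>R n\<bar> \<le> \<mu> * real n powr (- \<nu>) * sqrt ((cmod (C n))\<^sup>2 + (cmod (d n * D n))\<^sup>2))
       \<longrightarrow>
       integral {0..} (\<lambda>t. kwin T t * (\<bar>\<Sum>n. R (n + n0) * exp (r (n + n0) * t)\<bar>)\<^sup>2)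
         \<le> \<epsilon> * pi * T * (\<Sum>n. ((cmod (C (n + n0)))\<^sup>2 + (cmod (d (n + n0) * D (n + n0)))\<^sup>2)
                                   / (pi\<^sup>2 + T\<^sup>2 * (r (n + n0))\<^sup>2))"
  proof (intro exI[of _ n0] allI impI)
    fix T :: real and R :: "nat \<Rightarrow> real" and C D d :: "nat \<Rightarrow> complex"
    assume H: "T > 0
       \<and> summable (\<lambda>n. (cmod (C n))\<^sup>2 + (cmod (d n * D n))\<^sup>2)
       \<and> (\<forall>n\<ge>n'. n > 0 \<longrightarrow>
             \<bar>R n\<bar> \<le> \<mu> * real n powr (- \<nu>) * sqrt ((cmod (C n))\<^sup>2 + (cmod (d n * D n))\<^sup>2))"
    have T: "T > 0" using H by blast
    define a where "a n = (cmod (C (n+n0)))\<^sup>2 + (cmod (d (n+n0) * D (n+n0)))\<^sup>2" for n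
    define rr where "rr n = r (n+n0)" for n
    define RR where "RR n = R (n+n0)" for n
    define x where "x n = \<mu> * real (n+n0) powr (-\<nu>)" for n
    define Sx where "Sx = (\<Sum>n. \<mu>\<^sup>2 * real (n+n0) powr (-2*\<nu>))"
    define b where "b n = ((cmod (C (n + n0)))\<^sup>2 + (cmod (d (n + n0) * D (n + n0)))\<^sup>2)
                                   / (pi\<^sup>2 + T\<^sup>2 * (r (n + n0))\<^sup>2)" for n
    define B where "B = (\<Sum>n. b n)"
    have Sx: "Sx < \<epsilon>/2"
    proof -
      have "n0 \<ge> N1" by (simp add: n0_def)
      hence "norm Sx < \<epsilon>/2" using N1 unfolding Sx_def by blast
      thus ?thesis by simp
    qed
    have a_nn: "\<And>n. a n \<ge> 0" by (simp add: a_def)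
    have a_sum: "summable a" unfolding a_def
      using summable_ignore_initial_segment[of "\<lambda>n. (cmod (C n))\<^sup>2 + (cmod (d n * D n))\<^sup>2" n0] H by simp
    have rr_neg: "\<And>n. rr n < 0" using N2 unfolding rr_def n0_def by simp
    have x2: "(x n)\<^sup>2 = \<mu>\<^sup>2 * real (n+n0) powr (-2*\<nu>)" for n
    proof -
      have "(real (n+n0) powr (-\<nu>))\<^sup>2 = real (n+n0) powr (-2*\<nu>)"
        by (simp add: power2_eq_square powr_add[symmetric])
      thus ?thesis by (simp add: x_def power_mult_distrib)
    qed
    have x2sum: "summable (\<lambda>n. (x n)\<^sup>2)" unfolding x2
      using summable_ignore_initial_segment[OF sp2, of n0] by simp
    have x2Sx: "(\<Sum>n. (x n)\<^sup>2) = Sx" unfolding x2 Sx_def ..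
    have Sx_nn: "Sx \<ge> 0" unfolding x2Sx[symmetric] using x2sum by (simp add: suminf_nonneg)
    have x_nn: "\<And>n. x n \<ge> 0" using assms(3) by (simp add: x_def)
    have Rb: "\<bar>RR n\<bar> \<le> x n * sqrt (a n)" for n
    proof -
      have "n + n0 \<ge> n'" "n + n0 > 0" by (auto simp: n0_def)
      hence "\<bar>R (n+n0)\<bar> \<le> \<mu> * real (n+n0) powr (- \<nu>) * sqrt ((cmod (C (n+n0)))\<^sup>2 + (cmod (d (n+n0) * D (n+n0)))\<^sup>2)"
        using H by blast
      thus ?thesis unfolding RR_def x_def a_def .
    qed
    have b_nn: "\<And>n. b n \<ge> 0" by (simp add: b_def)
    have b_le: "b n \<le> a n / pi\<^sup>2" for n
      unfolding b_def a_def by (rule divide_left_mono) (auto simp: add_pos_nonneg)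
    have b_sum: "summable b"
      by (rule summable_comparison_test[of _ "\<lambda>n. a n / pi\<^sup>2"]) (use b_nn b_le a_sum in auto)
    have B_nn: "B \<ge> 0" unfolding B_def using b_sum b_nn by (simp add: suminf_nonneg)
    define I where "I n = pi*T*(1+exp((2*rr n)*T))/(pi\<^sup>2+(2*rr n)\<^sup>2*T\<^sup>2)" for n
    have I_int: "((\<lambda>t. sin (pi*t/T) * exp ((2*rr n)*t)) has_integral I n) {0..T}" for n
      unfolding I_def by (rule sin_exp_integral[OF T])
    have aI: "a n * I n \<le> 2*pi*T * b n" for n
    proof -
      have e: "exp((2*rr n)*T) \<le> 1" using rr_neg[of n] T by (simp add: mult_nonpos_nonneg)
      have p: "pi\<^sup>2 + T\<^sup>2 * (rr n)\<^sup>2 > 0" by (simp add: add_pos_nonneg)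
      have q: "pi\<^sup>2 + T\<^sup>2 * (rr n)\<^sup>2 \<le> pi\<^sup>2+(2*rr n)\<^sup>2*T\<^sup>2"
      proof -
        have "0 \<le> T\<^sup>2 * (rr n)\<^sup>2" by simp
        thus ?thesis by (simp add: power_mult_distrib algebra_simps)
      qed
      have "I n \<le> pi*T*2/(pi\<^sup>2+(2*rr n)\<^sup>2*T\<^sup>2)" unfolding I_def
        by (rule divide_right_mono) (use e T in \<open>auto intro: add_nonneg_nonneg\<close>)
      also have "\<dots> \<le> pi*T*2/(pi\<^sup>2 + T\<^sup>2 * (rr n)\<^sup>2)"
      proof (rule divide_left_mono)
        show "pi\<^sup>2 + T\<^sup>2 * (rr n)\<^sup>2 \<le> pi\<^sup>2+(2*rr n)\<^sup>2*T\<^sup>2" by (rule q)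
        show "0 \<le> pi*T*2" using T by simp
        have "0 < pi\<^sup>2+(2*rr n)\<^sup>2*T\<^sup>2" using p q by linarith
        thus "0 < (pi\<^sup>2+(2*rr n)\<^sup>2*T\<^sup>2) * (pi\<^sup>2 + T\<^sup>2 * (rr n)\<^sup>2)" using p by simp
      qed
      finally have "a n * I n \<le> a n * (pi*T*2/(pi\<^sup>2 + T\<^sup>2 * (rr n)\<^sup>2))"
        by (rule mult_left_mono) (rule a_nn)
      also have "\<dots> = 2*pi*T * b n" by (simp add: b_def a_def rr_def)
      finally show ?thesis .
    qed
    define M where "M = Sx * (2*pi*T*B)"
    define u where "u N t = (\<Sum>n<N. \<bar>RR n\<bar> * exp (rr n * t))" for N t
    define F where "F N t = kwin T t * (u N t)\<^sup>2" for N t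
    have u_nn: "u N t \<ge> 0" for N t unfolding u_def by (simp add: sum_nonneg)
    have ubound: "(u N t)\<^sup>2 \<le> Sx * (\<Sum>n<N. a n * (exp (rr n * t))\<^sup>2)" for N t
    proof -
      have "u N t \<le> (\<Sum>n<N. x n * (sqrt (a n) * exp (rr n * t)))" unfolding u_def
        by (rule sum_mono) (use Rb in \<open>auto simp: mult.assoc[symmetric] intro: mult_right_mono\<close>)
      hence "(u N t)\<^sup>2 \<le> (\<Sum>n<N. x n * (sqrt (a n) * exp (rr n * t)))\<^sup>2"
        using u_nn by (simp add: power_mono)
      also have "\<dots> \<le> (\<Sum>n<N. (x n)\<^sup>2) * (\<Sum>n<N. (sqrt (a n) * exp (rr n * t))\<^sup>2)"
        by (rule Cauchy_Schwarz_ineq_sum)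
      also have "(\<Sum>n<N. (sqrt (a n) * exp (rr n * t))\<^sup>2) = (\<Sum>n<N. a n * (exp (rr n * t))\<^sup>2)"
        using a_nn by (simp add: power_mult_distrib)
      also have "(\<Sum>n<N. (x n)\<^sup>2) \<le> Sx" unfolding x2Sx[symmetric]
        by (rule sum_le_suminf[OF x2sum]) auto
      hence "(\<Sum>n<N. (x n)\<^sup>2) * (\<Sum>n<N. a n * (exp (rr n * t))\<^sup>2) \<le> Sx * (\<Sum>n<N. a n * (exp (rr n * t))\<^sup>2)"
        by (rule mult_right_mono) (simp add: a_nn sum_nonneg)
      finally show ?thesis .
    qed
    have Gint: "((\<lambda>t. kwin T t * (Sx * (\<Sum>n<N. a n * (exp (rr n * t))\<^sup>2))) has_integral
                 (\<Sum>n<N. Sx * a n * I n)) {0..}" for N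
    proof (rule kwin_has_integral)
      have "((\<lambda>t. \<Sum>n<N. Sx * a n * (sin (pi*t/T) * exp ((2*rr n)*t))) has_integral
                 (\<Sum>n<N. Sx * a n * I n)) {0..T}"
        by (intro has_integral_sum has_integral_mult_right) (auto intro: I_int)
      thus "((\<lambda>t. sin (pi*t/T) * (Sx * (\<Sum>n<N. a n * (exp (rr n * t))\<^sup>2))) has_integral
                 (\<Sum>n<N. Sx * a n * I n)) {0..T}"
        by (rule has_integral_eq[rotated])
           (simp add: sum_distrib_left power2_eq_square exp_add[symmetric] algebra_simps)
    qed
    have Fint: "(F N) integrable_on {0..}" for N
    proof -
      have "continuous_on {0..T} (\<lambda>t. sin (pi*t/T) * (u N t)\<^sup>2)" unfolding u_def
        using T by (intro continuous_intros) auto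
      hence "((\<lambda>t. sin (pi*t/T) * (u N t)\<^sup>2) has_integral integral {0..T} (\<lambda>t. sin (pi*t/T) * (u N t)\<^sup>2)) {0..T}"
        using integrable_continuous_interval by blast
      from kwin_has_integral[OF this] show ?thesis unfolding F_def by blast
    qed
    have Fle: "integral {0..} (F N) \<le> M" for N
    proof -
      have "integral {0..} (F N) \<le> integral {0..} (\<lambda>t. kwin T t * (Sx * (\<Sum>n<N. a n * (exp (rr n * t))\<^sup>2)))"
      proof (rule integral_le[OF Fint has_integral_integrable[OF Gint]])
        fix t :: real assume "t \<in> {0..}"
        show "F N t \<le> kwin T t * (Sx * (\<Sum>n<N. a n * (exp (rr n * t))\<^sup>2))"
          unfolding F_def using ubound kwin_nonneg[OF T] by (rule mult_left_mono)
      qed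
      also have "\<dots> = (\<Sum>n<N. Sx * a n * I n)" by (rule integral_unique[OF Gint])
      also have "\<dots> = Sx * (\<Sum>n<N. a n * I n)" by (simp add: sum_distrib_left mult.assoc)
      also have "\<dots> \<le> Sx * (\<Sum>n<N. 2*pi*T * b n)"
        by (intro mult_left_mono sum_mono aI Sx_nn)
      also have "(\<Sum>n<N. 2*pi*T * b n) \<le> 2*pi*T*B"
        unfolding B_def sum_distrib_left[symmetric] using T b_sum b_nn
        by (intro mult_left_mono sum_le_suminf) auto
      hence "Sx * (\<Sum>n<N. 2*pi*T * b n) \<le> M" unfolding M_def using Sx_nn by (rule mult_left_mono)
      finally show ?thesis .
    qed
    have F_nn: "F N t \<ge> 0" for N t unfolding F_def using kwin_nonneg[OF T] by simp
    define U where "U t = (\<Sum>n. \<bar>RR n\<bar> * exp (rr n * t))" for t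
    have Usum: "summable (\<lambda>n. \<bar>RR n\<bar> * exp (rr n * t))" if t: "t \<ge> 0" for t
    proof (rule summable_comparison_test[of _ "\<lambda>n. ((x n)\<^sup>2 + a n)/2"])
      have "norm (\<bar>RR n\<bar> * exp (rr n * t)) \<le> ((x n)\<^sup>2 + a n)/2" for n
      proof -
        have e: "exp (rr n * t) \<le> 1" using rr_neg[of n] t by (simp add: mult_nonpos_nonneg)
        have "norm (\<bar>RR n\<bar> * exp (rr n * t)) = \<bar>RR n\<bar> * exp (rr n * t)" by simp
        also have "\<dots> \<le> \<bar>RR n\<bar>" using e by (simp add: mult_left_le)
        also have "\<dots> \<le> x n * sqrt (a n)" by (rule Rb)
        also have "\<dots> \<le> ((x n)\<^sup>2 + (sqrt (a n))\<^sup>2)/2" by (rule prod_le_half)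
        finally show ?thesis using a_nn[of n] by simp
      qed
      thus "\<exists>N. \<forall>n\<ge>N. norm (\<bar>RR n\<bar> * exp (rr n * t)) \<le> ((x n)\<^sup>2 + a n)/2" by blast
      show "summable (\<lambda>n. ((x n)\<^sup>2 + a n)/2)"
        by (intro summable_divide summable_add x2sum a_sum)
    qed
    define G where "G t = kwin T t * (U t)\<^sup>2" for t
    have MC: "G integrable_on {0..} \<and> ((\<lambda>N. integral {0..} (F N)) \<longlongrightarrow> integral {0..} G) sequentially"
    proof (rule monotone_convergence_increasing[OF Fint])
      fix N and t :: real assume "t \<in> {0..}"
      have "u N t \<le> u (Suc N) t" unfolding u_def by simp
      hence "(u N t)\<^sup>2 \<le> (u (Suc N) t)\<^sup>2" using u_nn by (simp add: power_mono)
      thus "F N t \<le> F (Suc N) t" unfolding F_def using kwin_nonneg[OF T] by (rule mult_left_mono)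
    next
      fix t :: real assume "t \<in> {0..}"
      hence "(\<lambda>N. u N t) \<longlonglongrightarrow> U t" unfolding u_def U_def using Usum
        by (auto intro: summable_LIMSEQ)
      thus "(\<lambda>N. F N t) \<longlonglongrightarrow> G t" unfolding F_def G_def by (intro tendsto_intros)
    next
      show "bounded (range (\<lambda>N. integral {0..} (F N)))"
        unfolding bounded_iff
      proof (intro exI ballI)
        fix y assume "y \<in> range (\<lambda>N. integral {0..} (F N))"
        then obtain N where y: "y = integral {0..} (F N)" by blast
        have "0 \<le> y" unfolding y using Fint F_nn by (simp add: integral_nonneg)
        thus "norm y \<le> M" using Fle y by simp
      qed
    qed
    have GM: "integral {0..} G \<le> M"
      using MC Fle by (intro LIMSEQ_le_const2[of "\<lambda>N. integral {0..} (F N)"]) auto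
    have Meps: "M \<le> \<epsilon> * pi * T * B"
    proof -
      have "M = (2*Sx) * (pi*T*B)" by (simp add: M_def)
      also have "\<dots> \<le> \<epsilon> * (pi*T*B)" using Sx T B_nn by (intro mult_right_mono) auto
      finally show ?thesis by simp
    qed
    define L where "L t = kwin T t * (\<bar>\<Sum>n. R (n + n0) * exp (r (n + n0) * t)\<bar>)\<^sup>2" for t
    have LG: "L t \<le> G t" if t: "t \<in> {0..}" for t
    proof -
      have s: "summable (\<lambda>n. \<bar>RR n * exp (rr n * t)\<bar>)" using Usum[of t] t by (simp add: abs_mult)
      have "\<bar>\<Sum>n. R (n + n0) * exp (r (n + n0) * t)\<bar> = \<bar>\<Sum>n. RR n * exp (rr n * t)\<bar>"
        by (simp add: RR_def rr_def)
      also have "\<dots> \<le> (\<Sum>n. \<bar>RR n * exp (rr n * t)\<bar>)" by (rule summable_rabs[OF s])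
      also have "\<dots> = U t" by (simp add: U_def abs_mult)
      finally have "(\<bar>\<Sum>n. R (n + n0) * exp (r (n + n0) * t)\<bar>)\<^sup>2 \<le> (U t)\<^sup>2"
        by (intro power_mono) auto
      thus ?thesis unfolding L_def G_def using kwin_nonneg[OF T] by (rule mult_left_mono)
    qed
    have "integral {0..} L \<le> \<epsilon> * pi * T * B"
    proof (cases "L integrable_on {0..}")
      case True
      have "integral {0..} L \<le> integral {0..} G" using True MC LG by (intro integral_le) auto
      thus ?thesis using GM Meps by linarith
    next
      case False
      hence "integral {0..} L = 0" by (rule not_integrable_integral)
      thus ?thesis using eps T B_nn by simp
    qed
    thus "integral {0..} (\<lambda>t. kwin T t * (\<bar>\<Sum>n. R (n + n0) * exp (r (n + n0) * t)\<bar>)\<^sup>2)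
         \<le> \<epsilon> * pi * T * (\<Sum>n. ((cmod (C (n + n0)))\<^sup>2 + (cmod (d (n + n0) * D (n + n0)))\<^sup>2)
                                   / (pi\<^sup>2 + T\<^sup>2 * (r (n + n0))\<^sup>2))"
      unfolding L_def B_def b_def .
  qed
qed

end
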